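(* Let $M\ge 3$ be an integer (the number of telescopes), let $0<\epsilon<1$, and let the coherence parameters $g_{XY}=a_{XY}+ib_{XY}\in\mathbb{C}$ ($X<Y$) be such that the state $\rho$ below is a density operator. Fix a pair of telescopes $X\neq Y$ and a phase $\delta\in\mathbb{R}$ with $|\mathrm{Re}(g_{XY}e^{-i\delta})|<1$. For any number of rounds $D\ge 1$ and any strengths $\tau_1,\dots,\tau_D\in[0,1]$ with $\gamma_D>0$, the Fisher information matrices (for the two real parameters $(a_{XY},b_{XY})$) of the quantum-randomness scheme and of the classical-randomness scheme satisfy $$F^{qr}_{XY}=\binom{M}{2}\gamma_D\,F^{cr}_{XY},\qquad\text{hence}\qquad \frac{\Vert F^{qr}_{XY}\Vert}{\Vert F^{cr}_{XY}\Vert}=\binom{M}{2}\gamma_D .$$ Moreover, with the strengths $\tau_1,\dots,\tau_D$ chosen optimally, $\gamma_D\to\frac{1}{M-1}$ as $D\to\infty$, so that the ratio tends to $\frac{1}{M-1}\binom{M}{2}=\frac{M}{2}$.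
   Context: Each telescope $j\in\{1,\dots,M\}$ holds one optical mode, truncated to a qubit with basis $|0\rangle_j$ (vacuum) and $|1\rangle_j$ (one photon). The received stellar state (to first order in the mean photon number $\epsilon$) is $\rho=(1-\epsilon)|0\cdots0\rangle\langle0\cdots0|+\epsilon\rho^{(1)}$, where $\rho^{(1)}$ is supported on the single-photon states $|e_j\rangle$ (photon at telescope $j$, vacuum elsewhere) with $\langle e_j|\rho^{(1)}|e_j\rangle=1/M$, $\langle e_j|\rho^{(1)}|e_k\rangle=g_{jk}/M$ for $j<k$, and $\langle e_k|\rho^{(1)}|e_j\rangle=g_{jk}^*/M$. For the pair $X,Y$, write $|10\rangle_{XY}$ for one photon at $X$ and none at $Y$, etc., and let $|\delta_\pm\rangle_{XY}=\frac{1}{\sqrt2}(|01\rangle\pm e^{i\delta}|10\rangle)_{XY}$; $\overline{XY}$ denotes the remaining $M-2$ telescopes. The Fisher information matrix of a family of outcome probabilities $p(x|\mathbf c)$ with respect to real parameters $\mathbf c=(c_1,c_2)$ is $F_{ij}=\sum_x \frac{1}{p(x|\mathbf c)}\partial_{c_i}p(x|\mathbf c)\,\partial_{c_j}p(x|\mathbf c)$, with $p(x|\mathbf c)=\mathrm{tr}(E_x\rho)$ and the sum taken over the outcomes listed below (the outcomes relevant to $g_{XY}$). Classical-randomness scheme: a uniformly random pair of telescopes receives an entangled dual-rail photon and performs the Gottesman–Jennewein–Croke interferometric measurement; its relevant POVM elements for the pair $XY$ are $E^{\pm}_{XY}=\frac{1}{2\binom{M}{2}}|\delta_\pm\rangle\langle\delta_\pm|_{XY}\otimes\mathbb{I}_{\overline{XY}}$,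 and $F^{cr}_{XY}$ is the Fisher information matrix for $(a_{XY},b_{XY})$ from these two outcomes. Quantum-randomness scheme: before distributing the entangled photon, in each round $r=1,\dots,D$ every telescope applies the local weak measurement with Kraus operators (in the basis $|0\rangle,|1\rangle$) $M_0=\mathrm{diag}(\sqrt{1-\tau_r},1)$, $M_1=\mathrm{diag}(\sqrt{\tau_r},0)$; the pair $XY$ is selected at the first round in which $X$ and $Y$ are exactly the telescopes that have never obtained outcome $M_1$, and then the same interferometric measurement is performed on $XY$. Its relevant POVM elements are $E^{\pm}_{XY}=\frac{\gamma_D}{2}|\delta_\pm\rangle\langle\delta_\pm|_{XY}\otimes|0\cdots0\rangle\langle0\cdots0|_{\overline{XY}}$, where, with $x_0=1$ and $x_r=\prod_{j=1}^r(1-\tau_j)$, $\gamma_D=\sum_{r=1}^D x_r\left[(1-x_r)^{M-2}-(1-x_{r-1})^{M-2}\right]$; $F^{qr}_{XY}$ is the Fisher information matrix for $(a_{XY},b_{XY})$ from these two outcomes. Both Fisher informations are per distributed entangled (terrestrial) photon. *)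

theory Defs
  imports "HOL-Analysis.Analysis"
begin

(* M telescopes, indexed 0..M-1.  A computational basis state of the M qubits
   is the set S of telescopes holding one photon (S \<subseteq> {..<M}).
   Operators are matrices indexed by such sets. *)

type_synonym op = "nat set \<Rightarrow> nat set \<Rightarrow> complex"
type_synonym ket = "nat set \<Rightarrow> complex"

definition basis :: "nat \<Rightarrow> nat set set" where
  "basis M = Pow {..<M}"

definition op_mult :: "nat \<Rightarrow> op \<Rightarrow> op \<Rightarrow> op" where
  "op_mult M A B = (\<lambda>S T. \<Sum>U\<in>basis M. A S U * B U T)"

definition op_trace :: "nat \<Rightarrow> op \<Rightarrow> complex" where
  "op_trace M A = (\<Sum>S\<in>basis M. A S S)"

definition is_density :: "nat \<Rightarrow> op \<Rightarrow> bool" where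
  "is_density M A \<longleftrightarrow>
     (\<forall>S\<in>basis M. \<forall>T\<in>basis M. A T S = cnj (A S T)) \<and>
     (\<forall>v :: ket. 0 \<le> Re (\<Sum>S\<in>basis M. \<Sum>T\<in>basis M. cnj (v S) * A S T * v T)) \<and>
     op_trace M A = 1"

definition rho1_entry :: "nat \<Rightarrow> (nat \<Rightarrow> nat \<Rightarrow> complex) \<Rightarrow> nat \<Rightarrow> nat \<Rightarrow> complex" where
  "rho1_entry M g j k =
     (if j = k then 1 / of_nat M
      else if j < k then g j k / of_nat M
      else cnj (g k j) / of_nat M)"

definition stellar_state :: "nat \<Rightarrow> real \<Rightarrow> (nat \<Rightarrow> nat \<Rightarrow> complex) \<Rightarrow> op" where
  "stellar_state M \<epsilon> g = (\<lambda>S T.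
     (if S = {} \<and> T = {} then complex_of_real (1 - \<epsilon>) else 0) +
     (if (\<exists>j k. S = {j} \<and> T = {k})
      then complex_of_real \<epsilon> * rho1_entry M g (THE j. S = {j}) (THE k. T = {k})
      else 0))"

definition param_state :: "nat \<Rightarrow> real \<Rightarrow> (nat \<Rightarrow> nat \<Rightarrow> complex) \<Rightarrow> nat \<Rightarrow> nat \<Rightarrow> real^2 \<Rightarrow> op" where
  "param_state M \<epsilon> g X Y c =
     stellar_state M \<epsilon> (\<lambda>j k. if j = X \<and> k = Y then Complex (c$1) (c$2) else g j k)"

(* |delta_\<pm>>_XY = (|01> \<pm> e^{i delta}|10>)/sqrt 2 on the pair X,Y
   (|01>_XY: no photon at X, one photon at Y); pm = True for +, False for - *)
definition ket_delta :: "nat \<Rightarrow> nat \<Rightarrow> real \<Rightarrow> bool \<Rightarrow> ket" where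
  "ket_delta X Y \<delta> pm = (\<lambda>S.
     if S = {Y} then complex_of_real (1 / sqrt 2)
     else if S = {X} then (if pm then 1 else -1) * cis \<delta> / complex_of_real (sqrt 2)
     else 0)"

definition proj :: "ket \<Rightarrow> op" where
  "proj v = (\<lambda>S T. v S * cnj (v T))"

(* A_XY \<otimes> B_(rest) *)
definition tensor_pair :: "nat \<Rightarrow> nat \<Rightarrow> op \<Rightarrow> op \<Rightarrow> op" where
  "tensor_pair X Y A B = (\<lambda>S T.
     A (S \<inter> {X, Y}) (T \<inter> {X, Y}) * B (S - {X, Y}) (T - {X, Y}))"

definition id_op :: op where
  "id_op = (\<lambda>S T. if S = T then 1 else 0)"

definition vac_proj :: op where
  "vac_proj = (\<lambda>S T. if S = {} \<and> T = {} then 1 else 0)"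

definition E_cr :: "nat \<Rightarrow> nat \<Rightarrow> nat \<Rightarrow> real \<Rightarrow> bool \<Rightarrow> op" where
  "E_cr M X Y \<delta> pm = (\<lambda>S T.
     complex_of_real (1 / (2 * real (M choose 2))) *
     tensor_pair X Y (proj (ket_delta X Y \<delta> pm)) id_op S T)"

definition xr :: "(nat \<Rightarrow> real) \<Rightarrow> nat \<Rightarrow> real" where
  "xr \<tau> r = (\<Prod>j = 1..r. 1 - \<tau> j)"

definition gammaD :: "nat \<Rightarrow> nat \<Rightarrow> (nat \<Rightarrow> real) \<Rightarrow> real" where
  "gammaD M D \<tau> =
     (\<Sum>r = 1..D. xr \<tau> r * ((1 - xr \<tau> r) ^ (M - 2) - (1 - xr \<tau> (r - 1)) ^ (M - 2)))"

definition E_qr :: "nat \<Rightarrow> nat \<Rightarrow> nat \<Rightarrow> real \<Rightarrow> bool \<Rightarrow> nat \<Rightarrow> (nat \<Rightarrow> real) \<Rightarrow> op" where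
  "E_qr M X Y \<delta> pm D \<tau> = (\<lambda>S T.
     complex_of_real (gammaD M D \<tau> / 2) *
     tensor_pair X Y (proj (ket_delta X Y \<delta> pm)) vac_proj S T)"

definition outcome_prob :: "nat \<Rightarrow> op \<Rightarrow> op \<Rightarrow> real" where
  "outcome_prob M E \<rho> = Re (op_trace M (op_mult M E \<rho>))"

definition partial :: "(real^2 \<Rightarrow> real) \<Rightarrow> real^2 \<Rightarrow> 2 \<Rightarrow> real" where
  "partial f c i = deriv (\<lambda>t. f (\<chi> k. if k = i then t else c $ k)) (c $ i)"

definition fisher :: "'x set \<Rightarrow> ('x \<Rightarrow> real^2 \<Rightarrow> real) \<Rightarrow> real^2 \<Rightarrow> real^2^2" where
  "fisher Outs p c = (\<chi> i j. \<Sum>x\<in>Outs. (1 / p x c) * partial (p x) c i * partial (p x) c j)"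

definition F_cr :: "nat \<Rightarrow> real \<Rightarrow> (nat \<Rightarrow> nat \<Rightarrow> complex) \<Rightarrow> nat \<Rightarrow> nat \<Rightarrow> real \<Rightarrow> real^2 \<Rightarrow> real^2^2" where
  "F_cr M \<epsilon> g X Y \<delta> c =
     fisher (UNIV :: bool set)
       (\<lambda>pm c'. outcome_prob M (E_cr M X Y \<delta> pm) (param_state M \<epsilon> g X Y c')) c"

definition F_qr :: "nat \<Rightarrow> real \<Rightarrow> (nat \<Rightarrow> nat \<Rightarrow> complex) \<Rightarrow> nat \<Rightarrow> nat \<Rightarrow> real \<Rightarrow> nat \<Rightarrow> (nat \<Rightarrow> real) \<Rightarrow> real^2 \<Rightarrow> real^2^2" where
  "F_qr M \<epsilon> g X Y \<delta> D \<tau> c =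
     fisher (UNIV :: bool set)
       (\<lambda>pm c'. outcome_prob M (E_qr M X Y \<delta> pm D \<tau>) (param_state M \<epsilon> g X Y c')) c"

definition strengths :: "nat \<Rightarrow> (nat \<Rightarrow> real) set" where
  "strengths D = {\<tau>. \<forall>j\<in>{1..D}. 0 \<le> \<tau> j \<and> \<tau> j \<le> 1}"

definition gamma_opt :: "nat \<Rightarrow> nat \<Rightarrow> real" where
  "gamma_opt M D = (SUP \<tau>\<in>strengths D. gammaD M D \<tau>)"

end

theory Submission
  imports Defs
begin


definition Phi :: "nat \<Rightarrow> real \<Rightarrow> real" where
  "Phi n y = y ^ n - real n / (real n + 1) * y ^ (n + 1)"

lemma ineq1:
  fixes a b :: real
  assumes "0 \<le> a" "a \<le> b"
  shows "(1 - b) * (b ^ Suc m - a ^ Suc m) \<le> Phi (Suc m) b - Phi (Suc m) a"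
proof -
  let ?n = "Suc m"
  define f where "f t = Phi ?n t - Phi ?n a - (1 - t) * (t ^ ?n - a ^ ?n)" for t
  have "f a \<le> f b"
  proof (rule DERIV_nonneg_imp_nondecreasing[OF assms(2)])
    fix x assume x: "a \<le> x" "x \<le> b"
    have "DERIV f x :> (x ^ ?n - a ^ ?n)"
      unfolding f_def Phi_def
      apply (rule derivative_eq_intros refl)+
      apply (simp add: field_simps)
      done
    moreover have "x ^ ?n - a ^ ?n \<ge> 0" using power_mono[of a x "Suc m"] x assms by simp
    ultimately show "\<exists>y. DERIV f x :> y \<and> y \<ge> 0" by blast
  qed
  then show ?thesis by (simp add: f_def)
qed

lemma ineq2:
  fixes a b :: real
  assumes "0 \<le> a" "a \<le> b"
  shows "Phi (Suc m) b - Phi (Suc m) a - (1 - b) * (b ^ Suc m - a ^ Suc m) \<le> (b - a) * (b ^ Suc m - a ^ Suc m)"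
proof -
  let ?n = "Suc m"
  define f where "f t = (t - a) * (t ^ ?n - a ^ ?n) - (Phi ?n t - Phi ?n a - (1 - t) * (t ^ ?n - a ^ ?n))" for t
  have "f a \<le> f b"
  proof (rule DERIV_nonneg_imp_nondecreasing[OF assms(2)])
    fix x assume x: "a \<le> x" "x \<le> b"
    have "DERIV f x :> ((x - a) * real ?n * x ^ m)"
      unfolding f_def Phi_def
      apply (rule derivative_eq_intros refl)+
      apply (simp add: field_simps)
      done
    moreover have "(x - a) * real ?n * x ^ m \<ge> 0" using x assms by simp
    ultimately show "\<exists>y. DERIV f x :> y \<and> y \<ge> 0" by blast
  qed
  then show ?thesis by (simp add: f_def)
qed


lemma seq_upper:
  fixes x :: "nat \<Rightarrow> real"
  assumes "\<forall>r\<in>{1..D}. 0 \<le> x r \<and> x r \<le> x (r - 1) \<and> x (r - 1) \<le> 1"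
  shows "(\<Sum>r=1..D. x r * ((1 - x r) ^ Suc m - (1 - x (r - 1)) ^ Suc m))
     \<le> Phi (Suc m) (1 - x D) - Phi (Suc m) (1 - x 0)"
  using assms
proof (induction D)
  case 0 then show ?case by simp
next
  case (Suc D)
  have h: "0 \<le> x (Suc D) \<and> x (Suc D) \<le> x D \<and> x D \<le> 1" using Suc.prems[rule_format, of "Suc D"] by auto
  have "(1 - (1 - x (Suc D))) * ((1 - x (Suc D)) ^ Suc m - (1 - x D) ^ Suc m)
     \<le> Phi (Suc m) (1 - x (Suc D)) - Phi (Suc m) (1 - x D)"
    by (rule ineq1) (use h in auto)
  moreover have "(\<Sum>r=1..D. x r * ((1 - x r) ^ Suc m - (1 - x (r - 1)) ^ Suc m))
     \<le> Phi (Suc m) (1 - x D) - Phi (Suc m) (1 - x 0)"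
    using Suc by auto
  ultimately show ?case by simp
qed

lemma seq_lower:
  fixes x :: "nat \<Rightarrow> real"
  assumes "\<forall>r\<in>{1..D}. 0 \<le> x r \<and> x r \<le> x (r - 1) \<and> x (r - 1) \<le> 1 \<and> x (r - 1) - x r \<le> h"
  shows "(\<Sum>r=1..D. x r * ((1 - x r) ^ Suc m - (1 - x (r - 1)) ^ Suc m))
     \<ge> Phi (Suc m) (1 - x D) - Phi (Suc m) (1 - x 0) - h * ((1 - x D) ^ Suc m - (1 - x 0) ^ Suc m)"
  using assms
proof (induction D)
  case 0 then show ?case by simp
next
  case (Suc D)
  have hh: "0 \<le> x (Suc D) \<and> x (Suc D) \<le> x D \<and> x D \<le> 1 \<and> x D - x (Suc D) \<le> h" using Suc.prems[rule_format, of "Suc D"] by auto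
  have "Phi (Suc m) (1 - x (Suc D)) - Phi (Suc m) (1 - x D) - (1 - (1 - x (Suc D))) * ((1 - x (Suc D)) ^ Suc m - (1 - x D) ^ Suc m)
     \<le> ((1 - x (Suc D)) - (1 - x D)) * ((1 - x (Suc D)) ^ Suc m - (1 - x D) ^ Suc m)"
    by (rule ineq2) (use hh in auto)
  moreover have "((1 - x (Suc D)) - (1 - x D)) * ((1 - x (Suc D)) ^ Suc m - (1 - x D) ^ Suc m)
     \<le> h * ((1 - x (Suc D)) ^ Suc m - (1 - x D) ^ Suc m)"
    apply (rule mult_right_mono)
    using hh power_mono[of "1 - x D" "1 - x (Suc D)" "Suc m"] by auto
  moreover have "(\<Sum>r=1..D. x r * ((1 - x r) ^ Suc m - (1 - x (r - 1)) ^ Suc m))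
     \<ge> Phi (Suc m) (1 - x D) - Phi (Suc m) (1 - x 0) - h * ((1 - x D) ^ Suc m - (1 - x 0) ^ Suc m)"
    using Suc by auto
  ultimately show ?case by (simp add: algebra_simps)
qed

lemma xr_props:
  assumes "\<tau> \<in> strengths D" "r \<le> D"
  shows "0 \<le> xr \<tau> r \<and> xr \<tau> r \<le> 1"
  using assms(2)
proof (induction r)
  case 0 then show ?case by (simp add: xr_def)
next
  case (Suc r)
  have t: "0 \<le> \<tau> (Suc r) \<and> \<tau> (Suc r) \<le> 1" using assms(1) Suc.prems by (auto simp: strengths_def)
  have e: "xr \<tau> (Suc r) = xr \<tau> r * (1 - \<tau> (Suc r))" by (simp add: xr_def prod.nat_ivl_Suc')
  show ?case unfolding e using Suc t by (auto intro: mult_nonneg_nonneg mult_le_one)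
qed

lemma xr_step: "xr \<tau> (Suc r) = xr \<tau> r * (1 - \<tau> (Suc r))"
  by (simp add: xr_def prod.nat_ivl_Suc')

lemma xr_mono:
  assumes "\<tau> \<in> strengths D"
  shows "\<forall>r\<in>{1..D}. 0 \<le> xr \<tau> r \<and> xr \<tau> r \<le> xr \<tau> (r - 1) \<and> xr \<tau> (r - 1) \<le> 1"
proof
  fix r assume r: "r \<in> {1..D}"
  then obtain k where k: "r = Suc k" by (cases r) auto
  have t: "0 \<le> \<tau> (Suc k) \<and> \<tau> (Suc k) \<le> 1" using assms r k by (auto simp: strengths_def)
  have a: "0 \<le> xr \<tau> k \<and> xr \<tau> k \<le> 1" using xr_props[OF assms, of k] r k by auto
  have b: "0 \<le> xr \<tau> r \<and> xr \<tau> r \<le> 1" using xr_props[OF assms, of r] r by auto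
  have "xr \<tau> r \<le> xr \<tau> k" unfolding k xr_step using a t by (simp add: mult_left_le)
  then show "0 \<le> xr \<tau> r \<and> xr \<tau> r \<le> xr \<tau> (r - 1) \<and> xr \<tau> (r - 1) \<le> 1" using a b k by simp
qed

lemma Phi_0: "Phi (Suc m) 0 = 0"
  by (simp add: Phi_def)

lemma Phi_1: "Phi (Suc m) 1 = 1 / (real m + 2)"
  by (simp add: Phi_def field_simps)

lemma gammaD_upper:
  assumes "M \<ge> 3" "\<tau> \<in> strengths D"
  shows "gammaD M D \<tau> \<le> 1 / (real M - 1)"
proof -
  obtain m where m: "M - 2 = Suc m" using assms(1) by (metis Suc_diff_Suc Suc_le_lessD numeral_2_eq_2 numeral_3_eq_3)
  have Mm: "real M - 1 = real m + 2" using m assms(1) by linarith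
  have "gammaD M D \<tau> \<le> Phi (Suc m) (1 - xr \<tau> D) - Phi (Suc m) (1 - xr \<tau> 0)"
    unfolding gammaD_def m by (rule seq_upper[OF xr_mono[OF assms(2)]])
  also have "\<dots> = Phi (Suc m) (1 - xr \<tau> D)" by (simp add: xr_def Phi_def)
  also have "\<dots> \<le> Phi (Suc m) 1"
    using ineq1[of "1 - xr \<tau> D" 1 m] xr_props[OF assms(2), of D] by simp
  finally have "gammaD M D \<tau> \<le> Phi (Suc m) 1" .
  moreover have "Phi (Suc m) 1 = 1/(real M - 1)" unfolding Mm by (rule Phi_1)
  ultimately show ?thesis by simp
qed

definition tau_opt :: "nat \<Rightarrow> nat \<Rightarrow> real" where
  "tau_opt D j = 1 / real (D - j + 1)"

lemma tau_opt_str: "tau_opt D \<in> strengths D"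
  by (auto simp: strengths_def tau_opt_def)

lemma xr_opt: "D \<ge> 1 \<Longrightarrow> r \<le> D \<Longrightarrow> xr (tau_opt D) r = (real D - real r) / real D"
proof (induction r)
  case 0
  then show ?case by (auto simp: xr_def)
next
  case (Suc r)
  have ih: "xr (tau_opt D) r = (real D - real r) / real D" using Suc by auto
  have "real (D - Suc r + 1) = real D - real r" using Suc.prems by auto
  then have t: "tau_opt D (Suc r) = 1 / (real D - real r)" by (simp add: tau_opt_def)
  have nz: "real D - real r \<noteq> 0" "real D \<noteq> 0" using Suc.prems by auto
  show ?case unfolding xr_step ih t using nz by (simp add: field_simps)
qed

lemma gammaD_lower:
  assumes "M \<ge> 3" "D \<ge> 1"
  shows "gammaD M D (tau_opt D) \<ge> 1 / (real M - 1) - 1 / real D"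
proof -
  obtain m where m: "M - 2 = Suc m" using assms(1) by (metis Suc_diff_Suc Suc_le_lessD numeral_2_eq_2 numeral_3_eq_3)
  have Mm: "real M - 1 = real m + 2" using m assms(1) by linarith
  have hyp: "\<forall>r\<in>{1..D}. 0 \<le> xr (tau_opt D) r \<and> xr (tau_opt D) r \<le> xr (tau_opt D) (r - 1) \<and> xr (tau_opt D) (r - 1) \<le> 1
     \<and> xr (tau_opt D) (r - 1) - xr (tau_opt D) r \<le> 1 / real D"
  proof
    fix r assume r: "r \<in> {1..D}"
    have e1: "xr (tau_opt D) (r - 1) = (real D - real (r - 1)) / real D" using r xr_opt[OF assms(2), of "r - 1"] by auto
    have e2: "xr (tau_opt D) r = (real D - real r) / real D" using r xr_opt[OF assms(2), of r] by auto
    have e3: "real (r - 1) = real r - 1" using r by auto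
    have "xr (tau_opt D) (r - 1) - xr (tau_opt D) r = 1 / real D"
      unfolding e1 e2 e3 using assms(2) by (simp add: field_simps)
    then show "0 \<le> xr (tau_opt D) r \<and> xr (tau_opt D) r \<le> xr (tau_opt D) (r - 1) \<and> xr (tau_opt D) (r - 1) \<le> 1
     \<and> xr (tau_opt D) (r - 1) - xr (tau_opt D) r \<le> 1 / real D"
      using xr_mono[OF tau_opt_str, of D] r by auto
  qed
  have x0: "xr (tau_opt D) 0 = 1" by (simp add: xr_def)
  have xD: "xr (tau_opt D) D = 0" using xr_opt[OF assms(2), of D] by simp
  have "gammaD M D (tau_opt D) \<ge> Phi (Suc m) (1 - xr (tau_opt D) D) - Phi (Suc m) (1 - xr (tau_opt D) 0)
      - 1 / real D * ((1 - xr (tau_opt D) D) ^ Suc m - (1 - xr (tau_opt D) 0) ^ Suc m)"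
    unfolding gammaD_def m by (rule seq_lower[OF hyp])
  then have "gammaD M D (tau_opt D) \<ge> Phi (Suc m) 1 - 1 / real D"
    unfolding x0 xD by (simp add: Phi_0)
  moreover have "Phi (Suc m) 1 = 1/(real M - 1)" unfolding Mm by (rule Phi_1)
  ultimately show ?thesis by simp
qed

lemma gamma_opt_bounds:
  assumes "M \<ge> 3" "D \<ge> 1"
  shows "1 / (real M - 1) - 1 / real D \<le> gamma_opt M D \<and> gamma_opt M D \<le> 1 / (real M - 1)"
proof -
  have bdd: "bdd_above (gammaD M D ` strengths D)"
    by (rule bdd_aboveI[of _ "1/(real M - 1)"]) (use gammaD_upper[OF assms(1)] in auto)
  have ne: "strengths D \<noteq> {}" using tau_opt_str by blast
  have "gammaD M D (tau_opt D) \<le> gamma_opt M D"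
    unfolding gamma_opt_def by (rule cSUP_upper[OF tau_opt_str bdd])
  moreover have "gamma_opt M D \<le> 1 / (real M - 1)"
    unfolding gamma_opt_def by (rule cSUP_least[OF ne]) (use gammaD_upper[OF assms(1)] in auto)
  ultimately show ?thesis using gammaD_lower[OF assms] by auto
qed

lemma gamma_opt_lim:
  assumes "M \<ge> 3"
  shows "gamma_opt M \<longlonglongrightarrow> 1 / (real M - 1)"
proof (rule real_tendsto_sandwich[where f = "\<lambda>D. 1 / (real M - 1) - 1 / real D" and h = "\<lambda>D. 1 / (real M - 1)"])
  show "\<forall>\<^sub>F D in sequentially. 1 / (real M - 1) - 1 / real D \<le> gamma_opt M D"
    using gamma_opt_bounds[OF assms] by (auto intro: eventually_sequentiallyI[of 1])
  show "\<forall>\<^sub>F D in sequentially. gamma_opt M D \<le> 1 / (real M - 1)"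
    using gamma_opt_bounds[OF assms] by (auto intro: eventually_sequentiallyI[of 1])
  show "(\<lambda>D. 1 / (real M - 1) - 1 / real D) \<longlonglongrightarrow> 1 / (real M - 1)"
    using tendsto_diff[OF tendsto_const lim_1_over_n] by simp
qed auto



lemma kd_empty: "ket_delta X Y \<delta> pm {} = 0"
  by (simp add: ket_delta_def)

lemma kd_out: "k \<notin> {X, Y} \<Longrightarrow> ket_delta X Y \<delta> pm ({k} \<inter> {X, Y}) = 0"
  by (simp add: ket_delta_def)

lemma trace_zero:
  assumes "(S, U) \<notin> {({X},{X}), ({X},{Y}), ({Y},{X}), ({Y},{Y})}"
  shows "complex_of_real w * tensor_pair X Y (proj (ket_delta X Y \<delta> pm)) B S U * param_state M \<epsilon> g X Y c U S = 0"
proof (cases "param_state M \<epsilon> g X Y c U S = 0")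
  case True then show ?thesis by simp
next
  case False
  have z: "param_state M \<epsilon> g X Y c U S = 0" if "\<not>(U = {} \<and> S = {})" "\<not>(\<exists>j k. U = {j} \<and> S = {k})"
    unfolding param_state_def stellar_state_def
    by (subst if_not_P[OF that(1)], subst if_not_P[OF that(2)]) simp
  from False z have "(U = {} \<and> S = {}) \<or> (\<exists>j k. U = {j} \<and> S = {k})"
    by blast
  then show ?thesis
  proof
    assume "U = {} \<and> S = {}"
    then show ?thesis by (simp add: tensor_pair_def proj_def kd_empty)
  next
    assume "\<exists>j k. U = {j} \<and> S = {k}"
    then obtain j k where jk: "U = {j}" "S = {k}" by blast
    show ?thesis
    proof (cases "k \<in> {X, Y} \<and> j \<in> {X, Y}")
      case True then have "(S, U) \<in> {({X},{X}), ({X},{Y}), ({Y},{X}), ({Y},{Y})}" using jk by blast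
      with assms show ?thesis by blast
    next
      case False
      then have "ket_delta X Y \<delta> pm ({k} \<inter> {X, Y}) = 0 \<or> ket_delta X Y \<delta> pm ({j} \<inter> {X, Y}) = 0"
        using kd_out[of k X Y \<delta> pm] kd_out[of j X Y \<delta> pm] by blast
      then show ?thesis unfolding jk tensor_pair_def proj_def by auto
    qed
  qed
qed


lemma ps_diag: "param_state M \<epsilon> g X Y c {a} {a} = complex_of_real \<epsilon> * (1 / of_nat M)"
  by (simp add: param_state_def stellar_state_def rho1_entry_def)

lemma ps_XY: "X < Y \<Longrightarrow> param_state M \<epsilon> g X Y c {X} {Y} = complex_of_real \<epsilon> * (Complex (c$1) (c$2) / of_nat M)"
  by (simp add: param_state_def stellar_state_def rho1_entry_def)

lemma ps_YX: "X < Y \<Longrightarrow> param_state M \<epsilon> g X Y c {Y} {X} = complex_of_real \<epsilon> * (cnj (Complex (c$1) (c$2)) / of_nat M)"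
  by (simp add: param_state_def stellar_state_def rho1_entry_def)

lemma kdY: "ket_delta X Y \<delta> pm {Y} = complex_of_real (1 / sqrt 2)"
  by (simp add: ket_delta_def)

lemma kdX: "X \<noteq> Y \<Longrightarrow> ket_delta X Y \<delta> pm {X} = (if pm then 1 else -1) * cis \<delta> / complex_of_real (sqrt 2)"
  by (simp add: ket_delta_def)

lemma tp: "a \<in> {X, Y} \<Longrightarrow> b \<in> {X, Y} \<Longrightarrow> tensor_pair X Y A B {a} {b} = A {a} {b} * B {} {}"
  by (auto simp: tensor_pair_def)
lemma the_single: "(THE j. {a} = {j}) = a"
  by simp

lemma trace_formula:
  assumes "X < Y" "Y < M" and B0: "B {} {} = 1"
  shows "outcome_prob M (\<lambda>S T. complex_of_real w * tensor_pair X Y (proj (ket_delta X Y \<delta> pm)) B S T) (param_state M \<epsilon> g X Y c)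
     = w * (\<epsilon> / real M) * (1 + (if pm then 1 else -1) * (c$1 * cos \<delta> + c$2 * sin \<delta>))"
proof -
  define f where "f = (\<lambda>(S, U). complex_of_real w * tensor_pair X Y (proj (ket_delta X Y \<delta> pm)) B S U * param_state M \<epsilon> g X Y c U S)"
  define Q where "Q = {({X},{X}), ({X},{Y}), ({Y},{X}), ({Y},{Y})}"
  have fin: "finite (basis M \<times> basis M)" by (simp add: basis_def)
  have sub: "Q \<subseteq> basis M \<times> basis M" using assms by (auto simp: Q_def basis_def)
  have "op_trace M (op_mult M (\<lambda>S T. complex_of_real w * tensor_pair X Y (proj (ket_delta X Y \<delta> pm)) B S T) (param_state M \<epsilon> g X Y c))
      = (\<Sum>S\<in>basis M. \<Sum>U\<in>basis M. f (S, U))"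
    by (simp add: op_trace_def op_mult_def f_def)
  also have "\<dots> = sum f (basis M \<times> basis M)" by (simp add: sum.cartesian_product)
  also have "\<dots> = sum f Q"
  proof (rule sum.mono_neutral_right[OF fin sub], rule ballI)
    fix p assume "p \<in> basis M \<times> basis M - Q"
    then have "p \<notin> Q" by blast
    obtain S U where p: "p = (S, U)" by (cases p)
    have "(S, U) \<notin> {({X},{X}), ({X},{Y}), ({Y},{X}), ({Y},{Y})}" using \<open>p \<notin> Q\<close> p unfolding Q_def by simp
    then show "f p = 0" unfolding f_def p case_prod_conv by (rule trace_zero)
  qed
  also have "\<dots> = f ({X},{X}) + f ({X},{Y}) + f ({Y},{X}) + f ({Y},{Y})"
    using assms by (simp add: Q_def)
  finally have tr: "op_trace M (op_mult M (\<lambda>S T. complex_of_real w * tensor_pair X Y (proj (ket_delta X Y \<delta> pm)) B S T) (param_state M \<epsilon> g X Y c))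
      = f ({X},{X}) + f ({X},{Y}) + f ({Y},{X}) + f ({Y},{Y})" .
  show ?thesis
    unfolding outcome_prob_def tr
    using assms
    apply (simp add: f_def tp proj_def B0 ps_diag ps_XY ps_YX kdX kdY)
    apply (simp add: divide_simps algebra_simps)
    done
qed

lemma partial_formula:
  fixes A s \<delta> :: real
  shows "partial (\<lambda>c'. A * (1 + s * (c'$1 * cos \<delta> + c'$2 * sin \<delta>))) c i
     = A * s * (if i = 1 then cos \<delta> else sin \<delta>)"
proof (cases "i = 1")
  case True
  have "deriv (\<lambda>t. A * (1 + s * (t * cos \<delta> + c$2 * sin \<delta>))) (c$1) = A * s * cos \<delta>"
    by (rule DERIV_imp_deriv) (auto intro!: derivative_eq_intros)
  then show ?thesis using True by (simp add: partial_def)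
next
  case False
  then have i2: "i = 2" using exhaust_2 by blast
  have "deriv (\<lambda>t. A * (1 + s * (c$1 * cos \<delta> + t * sin \<delta>))) (c$2) = A * s * sin \<delta>"
    by (rule DERIV_imp_deriv) (auto intro!: derivative_eq_intros)
  then show ?thesis using i2 by (simp add: partial_def)
qed

lemma fisher_formula:
  fixes A \<delta> :: real
  shows "fisher (UNIV::bool set) (\<lambda>pm c'. A * (1 + (if pm then 1 else -1) * (c'$1 * cos \<delta> + c'$2 * sin \<delta>))) c
    = (\<chi> i j. A * (if i = 1 then cos \<delta> else sin \<delta>) * (if j = 1 then cos \<delta> else sin \<delta>)
        * (1 / (1 + (c$1 * cos \<delta> + c$2 * sin \<delta>)) + 1 / (1 - (c$1 * cos \<delta> + c$2 * sin \<delta>))))"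
proof -
  define p where "p = (\<lambda>pm (c'::real^2). A * (1 + (if pm then 1 else -1) * (c'$1 * cos \<delta> + c'$2 * sin \<delta>)))"
  define u where "u = (\<lambda>i::2. if i = 1 then cos \<delta> else sin \<delta>)"
  define r where "r = c$1 * cos \<delta> + c$2 * sin \<delta>"
  have eT: "p True = (\<lambda>c'. A * (1 + 1 * (c'$1 * cos \<delta> + c'$2 * sin \<delta>)))" by (simp add: p_def)
  have eF: "p False = (\<lambda>c'. A * (1 + (-1) * (c'$1 * cos \<delta> + c'$2 * sin \<delta>)))" by (simp add: p_def)
  have pT: "partial (p True) c i = A * 1 * u i" for i
    unfolding eT u_def by (rule partial_formula)
  have pF: "partial (p False) c i = A * (-1) * u i" for i
    unfolding eF u_def by (rule partial_formula)
  have vT: "p True c = A * (1 + r)" by (simp add: p_def r_def)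
  have vF: "p False c = A * (1 - r)" by (simp add: p_def r_def)
  have key: "(1 / (A * (1 + r))) * (A * u i) * (A * u j) + (1 / (A * (1 - r))) * (A * u i) * (A * u j)
      = A * u i * u j * (1 / (1 + r) + 1 / (1 - r))" for i j
  proof -
    have k1: "1/(A*z) * (A*x) * (A*y) = A*x*y/z" for z x y :: real
      by (cases "A=0"; cases "z=0") (simp_all add: field_simps)
    show ?thesis unfolding k1 by (simp add: distrib_left)
  qed
  have "fisher (UNIV::bool set) p c = (\<chi> i j. A * u i * u j * (1 / (1 + r) + 1 / (1 - r)))"
  proof -
    have "fisher (UNIV::bool set) p c = (\<chi> i j. 1 / p False c * partial (p False) c i * partial (p False) c j
       + 1 / p True c * partial (p True) c i * partial (p True) c j)"
      unfolding fisher_def UNIV_bool by simp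
    also have "\<dots> = (\<chi> i j. (1 / (A * (1 + r))) * (A * u i) * (A * u j) + (1 / (A * (1 - r))) * (A * u i) * (A * u j))"
      unfolding pT pF vT vF by (simp add: add.commute)
    also have "\<dots> = (\<chi> i j. A * u i * u j * (1 / (1 + r) + 1 / (1 - r)))"
      unfolding key ..
    finally show ?thesis .
  qed
  then show ?thesis unfolding p_def u_def r_def .
qed



lemma choose2_real: "M \<ge> 2 \<Longrightarrow> real (M choose 2) = real M * (real M - 1) / 2"
proof -
  assume "M \<ge> 2"
  have "even (M * (M - 1))" by (cases "even M") auto
  then have "real (M * (M - 1) div 2) = real (M * (M - 1)) / 2"
    by (simp add: real_of_nat_div)
  then show ?thesis using \<open>M \<ge> 2\<close> by (simp add: choose_two of_nat_diff)
qed

theorem theorem1: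
  fixes M :: nat and \<epsilon> :: real and g :: "nat \<Rightarrow> nat \<Rightarrow> complex"
    and X Y :: nat and \<delta> :: real
  assumes "M \<ge> 3" and "0 < \<epsilon>" and "\<epsilon> < 1"
    and "is_density M (stellar_state M \<epsilon> g)"
    and "X < Y" and "Y < M"
    and "\<bar>Re (g X Y * cis (- \<delta>))\<bar> < 1"
  shows "(\<forall>D \<ge> 1. \<forall>\<tau> \<in> strengths D. gammaD M D \<tau> > 0 \<longrightarrow>
            (let c0 = vector [Re (g X Y), Im (g X Y)] :: real^2;
                 Fq = F_qr M \<epsilon> g X Y \<delta> D \<tau> c0;
                 Fc = F_cr M \<epsilon> g X Y \<delta> c0
             in Fq = (real (M choose 2) * gammaD M D \<tau>) *\<^sub>R Fc \<and>
                norm Fq / norm Fc = real (M choose 2) * gammaD M D \<tau>))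
       \<and> (gamma_opt M \<longlonglongrightarrow> 1 / (real M - 1))
       \<and> ((\<lambda>D. real (M choose 2) * gamma_opt M D) \<longlonglongrightarrow> real M / 2)"
proof (intro conjI allI impI ballI)
  show lim: "gamma_opt M \<longlonglongrightarrow> 1 / (real M - 1)" by (rule gamma_opt_lim[OF assms(1)])
  have C: "real (M choose 2) * (1 / (real M - 1)) = real M / 2"
  proof -
    have nz: "real M - 1 \<noteq> 0" using assms(1) by simp
    have "real (M choose 2) = real M * (real M - 1) / 2" using assms(1) by (simp add: choose2_real)
    then show ?thesis using nz by simp
  qed
  show "(\<lambda>D. real (M choose 2) * gamma_opt M D) \<longlonglongrightarrow> real M / 2"
    using tendsto_mult_left[OF lim, of "real (M choose 2)"] unfolding C .
next
  fix D :: nat and \<tau> assume D: "D \<ge> 1" and tau: "\<tau> \<in> strengths D" and gpos: "gammaD M D \<tau> > 0"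
  define C where "C = real (M choose 2)"
  have Cpos: "C > 0" using assms(1) by (simp add: C_def)
  define c0 where "c0 = (vector [Re (g X Y), Im (g X Y)] :: real^2)"
  define r where "r = c0$1 * cos \<delta> + c0$2 * sin \<delta>"
  have r_eq: "r = Re (g X Y * cis (- \<delta>))" by (simp add: r_def c0_def)
  have r1: "\<bar>r\<bar> < 1" using assms(7) r_eq by simp
  define \<kappa> where "\<kappa> = 1 / (1 + r) + 1 / (1 - r)"
  have kpos: "\<kappa> > 0"
  proof -
    have "1 + r > 0" "1 - r > 0" using r1 by auto
    then show ?thesis unfolding \<kappa>_def by (simp add: add_pos_pos)
  qed
  define U where "U = (\<chi> i j. (if i = 1 then cos \<delta> else sin \<delta>) * (if j = 1 then cos \<delta> else sin \<delta>) :: real^2^2)"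
  define Ac where "Ac = 1 / (2 * C) * (\<epsilon> / real M)"
  define Aq where "Aq = gammaD M D \<tau> / 2 * (\<epsilon> / real M)"
  have pc: "(\<lambda>pm c'. outcome_prob M (E_cr M X Y \<delta> pm) (param_state M \<epsilon> g X Y c'))
     = (\<lambda>pm c'. Ac * (1 + (if pm then 1 else -1) * (c'$1 * cos \<delta> + c'$2 * sin \<delta>)))"
  proof (intro ext)
    fix pm c'
    show "outcome_prob M (E_cr M X Y \<delta> pm) (param_state M \<epsilon> g X Y c') = Ac * (1 + (if pm then 1 else -1) * (c'$1 * cos \<delta> + c'$2 * sin \<delta>))"
      unfolding E_cr_def Ac_def C_def by (rule trace_formula[OF assms(5,6)]) (simp add: id_op_def)
  qed
  have pq: "(\<lambda>pm c'. outcome_prob M (E_qr M X Y \<delta> pm D \<tau>) (param_state M \<epsilon> g X Y c'))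
     = (\<lambda>pm c'. Aq * (1 + (if pm then 1 else -1) * (c'$1 * cos \<delta> + c'$2 * sin \<delta>)))"
  proof (intro ext)
    fix pm c'
    show "outcome_prob M (E_qr M X Y \<delta> pm D \<tau>) (param_state M \<epsilon> g X Y c') = Aq * (1 + (if pm then 1 else -1) * (c'$1 * cos \<delta> + c'$2 * sin \<delta>))"
      unfolding E_qr_def Aq_def by (rule trace_formula[OF assms(5,6)]) (simp add: vac_proj_def)
  qed
  have Fc: "F_cr M \<epsilon> g X Y \<delta> c0 = (Ac * \<kappa>) *\<^sub>R U"
    unfolding F_cr_def pc fisher_formula
    by (simp add: vec_eq_iff U_def \<kappa>_def r_def)
  have Fq: "F_qr M \<epsilon> g X Y \<delta> D \<tau> c0 = (Aq * \<kappa>) *\<^sub>R U"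
    unfolding F_qr_def pq fisher_formula
    by (simp add: vec_eq_iff U_def \<kappa>_def r_def)
  have AqAc: "Aq = (C * gammaD M D \<tau>) * Ac" using Cpos by (simp add: Aq_def Ac_def field_simps)
  have eq: "F_qr M \<epsilon> g X Y \<delta> D \<tau> c0 = (C * gammaD M D \<tau>) *\<^sub>R F_cr M \<epsilon> g X Y \<delta> c0"
    unfolding Fq Fc AqAc by simp
  have Acpos: "Ac > 0" using Cpos assms(2,6) by (simp add: Ac_def)
  have U0: "U \<noteq> 0"
  proof
    assume "U = 0"
    then have "U$1$1 + U$2$2 = 0" by simp
    then show False by (simp add: U_def power2_eq_square[symmetric])
  qed
  have Fc0: "F_cr M \<epsilon> g X Y \<delta> c0 \<noteq> 0" unfolding Fc using Acpos kpos U0 by simp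
  have "norm (F_qr M \<epsilon> g X Y \<delta> D \<tau> c0) / norm (F_cr M \<epsilon> g X Y \<delta> c0) = C * gammaD M D \<tau>"
    unfolding eq using Fc0 Cpos gpos by simp
  with eq show "let c0 = vector [Re (g X Y), Im (g X Y)] :: real^2;
                 Fq = F_qr M \<epsilon> g X Y \<delta> D \<tau> c0;
                 Fc = F_cr M \<epsilon> g X Y \<delta> c0
             in Fq = (real (M choose 2) * gammaD M D \<tau>) *\<^sub>R Fc \<and>
                norm Fq / norm Fc = real (M choose 2) * gammaD M D \<tau>"
    unfolding Let_def c0_def C_def by simp
qed

end
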